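(* Let $(X,d)$ be a complete metric space and let $T\colon X\to X$ satisfy (CM): for all $x,y\in X$, $x\neq y$ implies $d(Tx,Ty)<\frac{1}{2}\{d(x,Tx)+d(y,Ty)\}$. Then the following are equivalent: (i) for every $x\in X$ and every $\varepsilon>0$ there exists $\delta>0$ such that for all $i,j\in\mathbb{N}\cup\{0\}$, $\frac{1}{2}\{d(T^ix,T^{i+1}x)+d(T^jx,T^{j+1}x)\}<\varepsilon+\delta$ implies $d(T^{i+1}x,T^{j+1}x)\le\varepsilon$; (ii) $T$ has a unique fixed point $z\in X$ and the sequence $(T^nx)_{n}$ converges to $z$ for every $x\in X$.
   Context: $T^n$ denotes the $n$-fold composition of $T$, with $T^0$ the identity; $\mathbb{N}=\{1,2,3,\dots\}$. *)

theory Defs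
  imports "HOL-Analysis.Analysis"
begin

end

theory Submission
  imports Defs
begin

lemma finite_delta:
  assumes "finite S" "\<forall>s\<in>S. \<exists>d>0. P s (d::real)"
    "\<And>s d d'. P s d \<Longrightarrow> 0 < d' \<Longrightarrow> d' \<le> d \<Longrightarrow> P s d'"
  shows "\<exists>d>0. \<forall>s\<in>S. P s d"
  using assms(1,2)
proof (induction S rule: finite_induct)
  case empty then show ?case by (auto intro: exI[of _ 1])
next
  case (insert x F)
  then obtain d1 where d1: "d1>0" "\<forall>s\<in>F. P s d1" by auto
  from insert obtain d2 where d2: "d2>0" "P x d2" by auto
  have "\<forall>s\<in>insert x F. P s (min d1 d2)"
  proof
    fix s assume "s \<in> insert x F"
    then show "P s (min d1 d2)"
    proof
      assume "s = x" then show ?thesis using assms(3)[OF d2(2)] d1(1) d2(1) by simp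
    next
      assume "s \<in> F" then show ?thesis using assms(3)[OF d1(2)[rule_format, OF \<open>s \<in> F\<close>]] d1(1) d2(1) by simp
    qed
  qed
  then show ?case using d1 d2 by (intro exI[of _ "min d1 d2"]) auto
qed

context
  fixes T :: "'a::complete_space \<Rightarrow> 'a"
  assumes CM: "\<And>x y. x \<noteq> y \<Longrightarrow> dist (T x) (T y) < (dist x (T x) + dist y (T y)) / 2"
begin

lemma dist_le: "dist (T x) (T y) \<le> (dist x (T x) + dist y (T y)) / 2"
proof (cases "x = y")
  case True then show ?thesis by simp
next
  case False then show ?thesis using CM[of x y] by linarith
qed

lemma fp_unique: "T z = z \<Longrightarrow> T w = w \<Longrightarrow> z = w"
proof (rule ccontr)
  assume "T z = z" "T w = w" "z \<noteq> w"
  then show False using CM[of z w] by simp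
qed

lemma step_le: "dist (T y) (T (T y)) \<le> dist y (T y)"
proof -
  have "dist (T y) (T (T y)) \<le> (dist y (T y) + dist (T y) (T (T y))) / 2" by (rule dist_le)
  then show ?thesis by (simp add: field_simps)
qed
lemma step_less: assumes "y \<noteq> T y" shows "dist (T y) (T (T y)) < dist y (T y)"
proof -
  have "dist (T y) (T (T y)) < (dist y (T y) + dist (T y) (T (T y))) / 2" using CM[OF assms] .
  then show ?thesis by (simp add: field_simps)
qed

lemma a_to_0:
  assumes H: "\<forall>\<epsilon>>0. \<exists>\<delta>>0. \<forall>i j :: nat. (dist ((T ^^ i) x) ((T ^^ (i+1)) x) + dist ((T ^^ j) x) ((T ^^ (j+1)) x)) / 2 < \<epsilon> + \<delta> \<longrightarrow> dist ((T ^^ (i+1)) x) ((T ^^ (j+1)) x) \<le> \<epsilon>"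
  shows "\<forall>e>0. \<exists>N. \<forall>n\<ge>N. dist ((T^^n) x) ((T^^Suc n) x) < e"
proof -
  define a where "a n = dist ((T^^n) x) ((T^^Suc n) x)" for n
  have dec: "a (Suc n) \<le> a n" for n unfolding a_def using step_le[of "(T^^n) x"] by simp
  have decs: "a (Suc n) < a n" if "a n > 0" for n
    using that step_less[of "(T^^n) x"] by (simp add: a_def)
  have mono: "a n \<le> a m" if "m \<le> n" for m n using that
  proof (induction n rule: dec_induct)
    case base show ?case by simp
  next
    case (step k) then show ?case using dec[of k] by linarith
  qed
  define r where "r = Inf (range a)"
  have bdd: "bdd_below (range a)" by (rule bdd_belowI[of _ 0]) (auto simp: a_def)
  have ar: "r \<le> a n" for n unfolding r_def using bdd by (simp add: cInf_lower)
  have r0: "r \<ge> 0" unfolding r_def by (rule cInf_greatest) (auto simp: a_def)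
  have "r = 0"
  proof (rule ccontr)
    assume "r \<noteq> 0" with r0 have rp: "r > 0" by simp
    with H obtain \<delta> where dp: "\<delta> > 0" and
      D: "\<forall>i j :: nat. (a i + a j) / 2 < r + \<delta> \<longrightarrow> dist ((T ^^ (i+1)) x) ((T ^^ (j+1)) x) \<le> r"
      unfolding a_def by auto
    have "r < r + \<delta>" using dp by simp
    then have "\<exists>y\<in>range a. y < r + \<delta>" using cInf_less_iff[OF _ bdd, of "r+\<delta>"] r_def by auto
    then obtain i where i: "a i < r + \<delta>" by auto
    have "(a i + a (Suc i)) / 2 < r + \<delta>" using i dec[of i] by argo
    then have "a (Suc i) \<le> r" using D[rule_format, of i "Suc i"] by (simp add: a_def)
    moreover have "a (Suc (Suc i)) < a (Suc i)" using decs ar[of "Suc i"] rp by force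
    ultimately show False using ar[of "Suc (Suc i)"] by linarith
  qed
  show ?thesis
  proof (intro allI impI)
    fix e :: real assume "e > 0"
    then have "Inf (range a) < e" using \<open>r = 0\<close> r_def by simp
    then obtain i where "a i < e" using cInf_less_iff[OF _ bdd] by auto
    then show "\<exists>N. \<forall>n\<ge>N. dist ((T^^n) x) ((T^^Suc n) x) < e"
      using mono unfolding a_def by (meson le_less_trans)
  qed
qed

lemma conv_fp:
  assumes "\<forall>e>0. \<exists>N. \<forall>n\<ge>N. dist ((T^^n) x) ((T^^Suc n) x) < e"
  shows "\<exists>z. T z = z \<and> (\<lambda>n. (T^^n) x) \<longlonglongrightarrow> z"
proof -
  define X where "X n = (T^^n) x" for n
  have XS: "X (Suc n) = T (X n)" for n by (simp add: X_def)
  have A: "\<forall>e>0. \<exists>N. \<forall>n\<ge>N. dist (X n) (X (Suc n)) < e" using assms unfolding X_def .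
  have "Cauchy X"
  proof (rule metric_CauchyI)
    fix e :: real assume "e > 0"
    then obtain N where N: "\<forall>n\<ge>N. dist (X n) (X (Suc n)) < e" using A by auto
    show "\<exists>M. \<forall>m\<ge>M. \<forall>n\<ge>M. dist (X m) (X n) < e"
    proof (intro exI[of _ "Suc N"] allI impI)
      fix m n assume "Suc N \<le> m" "Suc N \<le> n"
      then obtain i j where ij: "m = Suc i" "n = Suc j" "i \<ge> N" "j \<ge> N"
        by (metis Suc_le_D Suc_le_mono)
      have "dist (X m) (X n) \<le> (dist (X i) (X (Suc i)) + dist (X j) (X (Suc j)))/2"
        using dist_le[of "X i" "X j"] ij XS by simp
      moreover have "dist (X i) (X (Suc i)) < e" "dist (X j) (X (Suc j)) < e" using N ij by auto
      ultimately show "dist (X m) (X n) < e" by argo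
    qed
  qed
  then obtain z where z: "X \<longlonglongrightarrow> z" using Cauchy_convergent unfolding convergent_def by blast
  have "T z = z"
  proof (rule ccontr)
    assume "T z \<noteq> z"
    then have Dp: "dist z (T z) > 0" by simp
    define D where "D = dist z (T z)"
    obtain N1 where N1: "\<forall>n\<ge>N1. dist (X n) z < D/4"
      using z Dp unfolding lim_sequentially D_def by (meson zero_less_divide_iff zero_less_numeral)
    obtain N2 where N2: "\<forall>n\<ge>N2. dist (X n) (X (Suc n)) < D/4"
      using A Dp unfolding D_def by (meson zero_less_divide_iff zero_less_numeral)
    define n where "n = max N1 N2"
    have "D \<le> dist z (X (Suc n)) + dist (X (Suc n)) (T z)" unfolding D_def by (rule dist_triangle)
    also have "dist (X (Suc n)) (T z) \<le> (dist (X n) (X (Suc n)) + D)/2"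
      using dist_le[of "X n" z] XS unfolding D_def by simp
    finally have "D \<le> dist z (X (Suc n)) + (dist (X n) (X (Suc n)) + D)/2" by simp
    moreover have "dist (X (Suc n)) z < D/4" using N1 n_def by simp
    moreover have "dist (X n) (X (Suc n)) < D/4" using N2 n_def by simp
    ultimately show False using Dp D_def dist_commute[of z "X (Suc n)"] by argo
  qed
  then show ?thesis using z unfolding X_def by blast
qed

lemma ii_i:
  assumes fz: "T z = z" and lim: "(\<lambda>n. (T^^n) x) \<longlonglongrightarrow> z" and ep: "\<epsilon> > 0"
  shows "\<exists>\<delta>>0. \<forall>i j :: nat. (dist ((T ^^ i) x) ((T ^^ (i+1)) x) + dist ((T ^^ j) x) ((T ^^ (j+1)) x)) / 2 < \<epsilon> + \<delta> \<longrightarrow> dist ((T ^^ (i+1)) x) ((T ^^ (j+1)) x) \<le> \<epsilon>"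
proof -
  define X where "X n = (T^^n) x" for n
  define a where "a n = dist (X n) (X (Suc n))" for n
  have XS: "X (Suc n) = T (X n)" for n by (simp add: X_def)
  have conv: "\<forall>r>0. \<exists>no. \<forall>n\<ge>no. dist (X n) z < r" using lim unfolding lim_sequentially X_def .
  have apos: "a n \<ge> 0" for n by (simp add: a_def)
  have a0: "\<exists>N. \<forall>n\<ge>N. a n < e" if "e>0" for e
  proof -
    from conv that obtain N where N: "\<forall>n\<ge>N. dist (X n) z < e/2" by (meson half_gt_zero)
    have "\<forall>n\<ge>N. a n < e"
    proof (intro allI impI)
      fix n assume "n \<ge> N"
      then have "dist (X n) z < e/2" "dist (X (Suc n)) z < e/2" using N by auto
      moreover have "a n \<le> dist (X n) z + dist (X (Suc n)) z" unfolding a_def by (rule dist_triangle2)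
      ultimately show "a n < e" by linarith
    qed
    then show ?thesis by blast
  qed
  have hg: "dist (X (Suc i)) (X (Suc j)) \<le> (a i + a j)/2" for i j
    unfolding a_def XS by (rule dist_le)
  obtain N where N: "\<forall>n\<ge>N. a n < \<epsilon>" using a0 ep by blast
  have per_i: "\<exists>\<delta>>0. \<exists>M. \<forall>j\<ge>M. (a i + a j)/2 < \<epsilon>+\<delta> \<longrightarrow> dist (X (Suc i)) (X (Suc j)) \<le> \<epsilon>" for i
  proof (cases "a i > 2*\<epsilon>")
    case True
    have "\<forall>j\<ge>0. (a i + a j)/2 < \<epsilon>+(a i/2 - \<epsilon>) \<longrightarrow> dist (X (Suc i)) (X (Suc j)) \<le> \<epsilon>"
    proof (intro allI impI)
      fix j :: nat assume "(a i + a j)/2 < \<epsilon>+(a i/2 - \<epsilon>)"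
      then show "dist (X (Suc i)) (X (Suc j)) \<le> \<epsilon>" using apos[of j] by argo
    qed
    moreover have "a i/2 - \<epsilon> > 0" using True by simp
    ultimately show ?thesis by blast
  next
    case False
    have dz: "dist (X (Suc i)) z < \<epsilon>"
    proof (cases "X i = z")
      case True then show ?thesis using XS fz ep by simp
    next
      case False
      then have "dist (T (X i)) (T z) < (dist (X i) (T (X i)) + dist z (T z))/2" by (rule CM)
      then have "dist (X (Suc i)) z < a i / 2" using fz XS a_def by simp
      then show ?thesis using \<open>\<not> a i > 2*\<epsilon>\<close> by argo
    qed
    then have "\<epsilon> - dist (X (Suc i)) z > 0" by simp
    then obtain M where M: "\<forall>n\<ge>M. dist (X n) z < \<epsilon> - dist (X (Suc i)) z" using conv by blast
    have "\<forall>j\<ge>M. (a i + a j)/2 < \<epsilon>+1 \<longrightarrow> dist (X (Suc i)) (X (Suc j)) \<le> \<epsilon>"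
    proof (intro allI impI)
      fix j assume "j \<ge> M"
      then have "dist (X (Suc j)) z < \<epsilon> - dist (X (Suc i)) z" using M by simp
      moreover have "dist (X (Suc i)) (X (Suc j)) \<le> dist (X (Suc i)) z + dist (X (Suc j)) z"
        by (rule dist_triangle2)
      ultimately show "dist (X (Suc i)) (X (Suc j)) \<le> \<epsilon>" by linarith
    qed
    then show ?thesis by (intro exI[of _ "1::real"]) auto
  qed
  have part1: "\<exists>\<delta>>0. \<exists>M. \<forall>i<n. \<forall>j\<ge>M. (a i + a j)/2 < \<epsilon>+\<delta> \<longrightarrow> dist (X (Suc i)) (X (Suc j)) \<le> \<epsilon>" for n
  proof (induction n)
    case 0 show ?case by (intro exI[of _ "1::real"]) auto
  next
    case (Suc n)
    then obtain d1 M1 where d1: "d1 > 0" "\<forall>i<n. \<forall>j\<ge>M1. (a i + a j)/2 < \<epsilon>+d1 \<longrightarrow> dist (X (Suc i)) (X (Suc j)) \<le> \<epsilon>" by blast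
    obtain d2 M2 where d2: "d2 > 0" "\<forall>j\<ge>M2. (a n + a j)/2 < \<epsilon>+d2 \<longrightarrow> dist (X (Suc n)) (X (Suc j)) \<le> \<epsilon>" using per_i by blast
    have "\<forall>i<Suc n. \<forall>j\<ge>max M1 M2. (a i + a j)/2 < \<epsilon>+min d1 d2 \<longrightarrow> dist (X (Suc i)) (X (Suc j)) \<le> \<epsilon>"
    proof (intro allI impI)
      fix i j assume "i < Suc n" "max M1 M2 \<le> j" "(a i + a j)/2 < \<epsilon>+min d1 d2"
      show "dist (X (Suc i)) (X (Suc j)) \<le> \<epsilon>"
      proof (cases "i = n")
        case True
        then show ?thesis using d2(2) \<open>max M1 M2 \<le> j\<close> \<open>(a i + a j)/2 < \<epsilon>+min d1 d2\<close> by auto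
      next
        case False
        then have "i < n" using \<open>i < Suc n\<close> by simp
        then show ?thesis using d1(2) \<open>max M1 M2 \<le> j\<close> \<open>(a i + a j)/2 < \<epsilon>+min d1 d2\<close> by auto
      qed
    qed
    then show ?case using d1 d2 by (intro exI[of _ "min d1 d2"] conjI exI[of _ "max M1 M2"]) auto
  qed
  obtain d1 M1 where d1: "d1 > 0" "\<forall>i<N. \<forall>j\<ge>M1. (a i + a j)/2 < \<epsilon>+d1 \<longrightarrow> dist (X (Suc i)) (X (Suc j)) \<le> \<epsilon>"
    using part1 by blast
  define K where "K = max N M1"
  have "\<exists>d>0. \<forall>s\<in>{..<K}\<times>{..<K}. (\<lambda>s d. (a (fst s) + a (snd s))/2 < \<epsilon> + d \<longrightarrow> dist (X (Suc (fst s))) (X (Suc (snd s))) \<le> \<epsilon>) s d"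
  proof (rule finite_delta)
    show "finite ({..<K}\<times>{..<K})" by simp
    show "\<forall>s\<in>{..<K}\<times>{..<K}. \<exists>d>0. (a (fst s) + a (snd s))/2 < \<epsilon> + d \<longrightarrow> dist (X (Suc (fst s))) (X (Suc (snd s))) \<le> \<epsilon>"
    proof
      fix s :: "nat \<times> nat"
      show "\<exists>d>0. (a (fst s) + a (snd s))/2 < \<epsilon> + d \<longrightarrow> dist (X (Suc (fst s))) (X (Suc (snd s))) \<le> \<epsilon>"
      proof (cases "dist (X (Suc (fst s))) (X (Suc (snd s))) \<le> \<epsilon>")
        case True then show ?thesis by (intro exI[of _ "1::real"]) auto
      next
        case False
        then show ?thesis using hg[of "fst s" "snd s"]
          by (intro exI[of _ "(a (fst s) + a (snd s))/2 - \<epsilon>"]) auto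
      qed
    qed
  qed auto
  then obtain d2 where d2: "d2 > 0" "\<forall>i<K. \<forall>j<K. (a i + a j)/2 < \<epsilon> + d2 \<longrightarrow> dist (X (Suc i)) (X (Suc j)) \<le> \<epsilon>"
    by auto
  have fin: "\<forall>i j. (a i + a j)/2 < \<epsilon> + min d1 d2 \<longrightarrow> dist (X (Suc i)) (X (Suc j)) \<le> \<epsilon>"
  proof (intro allI impI)
    fix i j assume P: "(a i + a j)/2 < \<epsilon> + min d1 d2"
    show "dist (X (Suc i)) (X (Suc j)) \<le> \<epsilon>"
    proof -
      consider "i \<ge> N \<and> j \<ge> N" | "i < N \<and> j \<ge> M1" | "j < N \<and> i \<ge> M1" | "i < K \<and> j < K"
        unfolding K_def by linarith
      then show ?thesis
      proof cases
        case 1 then have "a i < \<epsilon>" "a j < \<epsilon>" using N by auto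
        then show ?thesis using hg[of i j] by argo
      next
        case 2 moreover have "(a i + a j)/2 < \<epsilon> + d1" using P min.cobounded1[of d1 d2] by argo
        ultimately show ?thesis using d1(2) by blast
      next
        case 3 moreover have "(a j + a i)/2 < \<epsilon> + d1" using P min.cobounded1[of d1 d2] by argo
        ultimately have "dist (X (Suc j)) (X (Suc i)) \<le> \<epsilon>" using d1(2) by blast
        then show ?thesis by (simp add: dist_commute)
      next
        case 4 moreover have "(a i + a j)/2 < \<epsilon> + d2" using P min.cobounded2[of d1 d2] by argo
        ultimately show ?thesis using d2(2) by blast
      qed
    qed
  qed
  have "min d1 d2 > 0" using d1 d2 by simp
  moreover have "\<forall>i j :: nat. (dist ((T ^^ i) x) ((T ^^ (i+1)) x) + dist ((T ^^ j) x) ((T ^^ (j+1)) x)) / 2 < \<epsilon> + min d1 d2 \<longrightarrow> dist ((T ^^ (i+1)) x) ((T ^^ (j+1)) x) \<le> \<epsilon>"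
    using fin unfolding a_def X_def by simp
  ultimately show ?thesis by blast
qed

end

theorem theorem3p1:
  fixes T :: "'a::complete_space \<Rightarrow> 'a"
  assumes CM: "\<And>x y. x \<noteq> y \<Longrightarrow> dist (T x) (T y) < (dist x (T x) + dist y (T y)) / 2"
  shows "(\<forall>x. \<forall>\<epsilon>>0. \<exists>\<delta>>0. \<forall>i j :: nat.
            (dist ((T ^^ i) x) ((T ^^ (i+1)) x) + dist ((T ^^ j) x) ((T ^^ (j+1)) x)) / 2 < \<epsilon> + \<delta>
            \<longrightarrow> dist ((T ^^ (i+1)) x) ((T ^^ (j+1)) x) \<le> \<epsilon>)
    \<longleftrightarrow> (\<exists>!z. T z = z) \<and> (\<exists>z. T z = z \<and> (\<forall>x. (\<lambda>n. (T ^^ n) x) \<longlonglongrightarrow> z))"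
proof
  assume H: "\<forall>x. \<forall>\<epsilon>>0. \<exists>\<delta>>0. \<forall>i j :: nat.
            (dist ((T ^^ i) x) ((T ^^ (i+1)) x) + dist ((T ^^ j) x) ((T ^^ (j+1)) x)) / 2 < \<epsilon> + \<delta>
            \<longrightarrow> dist ((T ^^ (i+1)) x) ((T ^^ (j+1)) x) \<le> \<epsilon>"
  have ex: "\<exists>z. T z = z \<and> (\<lambda>n. (T^^n) x) \<longlonglongrightarrow> z" for x
    using conv_fp[OF CM] a_to_0[OF CM] H by blast
  obtain z0 where z0: "T z0 = z0" using ex by blast
  have "\<forall>x. (\<lambda>n. (T ^^ n) x) \<longlonglongrightarrow> z0"
  proof
    fix x
    obtain z where "T z = z" "(\<lambda>n. (T^^n) x) \<longlonglongrightarrow> z" using ex by blast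
    then show "(\<lambda>n. (T ^^ n) x) \<longlonglongrightarrow> z0" using fp_unique[OF CM, of z z0] z0 by simp
  qed
  moreover have "\<exists>!z. T z = z" using z0 fp_unique[OF CM] by blast
  ultimately show "(\<exists>!z. T z = z) \<and> (\<exists>z. T z = z \<and> (\<forall>x. (\<lambda>n. (T ^^ n) x) \<longlonglongrightarrow> z))"
    using z0 by blast
next
  assume "(\<exists>!z. T z = z) \<and> (\<exists>z. T z = z \<and> (\<forall>x. (\<lambda>n. (T ^^ n) x) \<longlonglongrightarrow> z))"
  then obtain z where "T z = z" "\<forall>x. (\<lambda>n. (T ^^ n) x) \<longlonglongrightarrow> z" by blast
  then show "\<forall>x. \<forall>\<epsilon>>0. \<exists>\<delta>>0. \<forall>i j :: nat.
            (dist ((T ^^ i) x) ((T ^^ (i+1)) x) + dist ((T ^^ j) x) ((T ^^ (j+1)) x)) / 2 < \<epsilon> + \<delta>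
            \<longrightarrow> dist ((T ^^ (i+1)) x) ((T ^^ (j+1)) x) \<le> \<epsilon>"
    using ii_i[OF CM] by blast
qed

end
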